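(* Consider the binary integer program \[\text{(P)}\qquad\min_{x\in\{0,1\}^n}\ \langle x,Qx\rangle+\langle c,x\rangle\quad\text{s.t. } Ax\ge b,\ Bx=d,\] with $Q\in\mathbb R^{n\times n}$ symmetric, $c\in\mathbb R^n$, $A\in\mathbb R^{m_1\times n}$, $b\in\mathbb R^{m_1}$, $B\in\mathbb R^{m_2\times n}$, $d\in\mathbb R^{m_2}$. Let $J\subseteq[m_2]$ be a row index set and $I\subseteq[n]$ a column index set, with complements $\bar J$, $\bar I$, such that $B_J$ and $d_J$ are integral, $B_J$ is totally unimodular, and $B_{JI}$ is invertible. Define $s:=B_{JI}^{-1}d_J$ and $S:=-B_{JI}^{-1}B_{J\bar I}$, and \[Q':=S^\top Q_{II}S+S^\top Q_{I\bar I}+Q_{I\bar I}^\top S+Q_{\bar I\bar I},\quad A':=A_{\cdot I}S+A_{\cdot\bar I},\quad B':=B_{\bar JI}S+B_{\bar J\bar I},\quad b':=b-A_{\cdot I}s,\] \[c':=2S^\top Q_{II}s+2Q_{I\bar I}^\top s+S^\top c_I+c_{\bar I},\quad d':=d_{\bar J}-B_{\bar JI}s,\quad c_0':=\langle s,Q_{II}s\rangle+\langle c_I,s\rangle.\] Then the problem \[\text{(P')}\qquad\min_{x_{\bar I}\in\{0,1\}^{n-|I|}}\ \langle x_{\bar I},Q'x_{\bar I}\rangle+\langle c',x_{\bar I}\rangle+c_0'\quad\text{s.t. } A'x_{\bar I}\ge b',\ B'x_{\bar I}=d',\ Sx_{\bar I}\ge-s,\ Sx_{\bar I}\le\mathbf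 1-s\] is an exact reformulation of (P): the map $x_{\bar I}\mapsto x$ with $x_I:=s+Sx_{\bar I}$ is a bijection from the feasible set of (P') onto the feasible set of (P) that preserves objective values; in particular (P) and (P') have the same optimal value and optimal solutions correspond under this map.
   Context: For index sets, $B_J$ denotes the rows of $B$ indexed by $J$, $B_{JI}$ the submatrix with rows $J$ and columns $I$, $A_{\cdot I}$ the columns of $A$ indexed by $I$, $Q_{II},Q_{I\bar I},Q_{\bar I\bar I}$ the corresponding blocks of $Q$, and $x_I$, $c_I$, $d_J$ the subvectors. A matrix is totally unimodular if every square submatrix has determinant in $\{-1,0,1\}$. $\mathbf 1$ is the all-ones vector; $[m]=\{1,\dots,m\}$. *)

theory Defs
  imports Complex_Main "Jordan_Normal_Form.Determinant"
begin

text \<open>Matrices are functions row-index \<Rightarrow> column-index \<Rightarrow> real, restricted to explicit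
  finite carrier sets of rows and columns; vectors are functions index \<Rightarrow> real.\<close>

definition is_inverse_on :: "'r set \<Rightarrow> 'c set \<Rightarrow> ('r \<Rightarrow> 'c \<Rightarrow> real) \<Rightarrow> ('c \<Rightarrow> 'r \<Rightarrow> real) \<Rightarrow> bool" where
  "is_inverse_on R C M Minv \<longleftrightarrow>
     (\<forall>r\<in>R. \<forall>r'\<in>R. (\<Sum>k\<in>C. M r k * Minv k r') = (if r = r' then 1 else 0)) \<and>
     (\<forall>k\<in>C. \<forall>k'\<in>C. (\<Sum>r\<in>R. Minv k r * M r k') = (if k = k' then 1 else 0))"

definition invertible_on :: "'r set \<Rightarrow> 'c set \<Rightarrow> ('r \<Rightarrow> 'c \<Rightarrow> real) \<Rightarrow> bool" where
  "invertible_on R C M \<longleftrightarrow> (\<exists>Minv. is_inverse_on R C M Minv)"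

definition inverse_on :: "'r set \<Rightarrow> 'c set \<Rightarrow> ('r \<Rightarrow> 'c \<Rightarrow> real) \<Rightarrow> ('c \<Rightarrow> 'r \<Rightarrow> real)" where
  "inverse_on R C M = (SOME Minv. is_inverse_on R C M Minv)"

definition totally_unimodular_on :: "'r set \<Rightarrow> 'c set \<Rightarrow> ('r \<Rightarrow> 'c \<Rightarrow> real) \<Rightarrow> bool" where
  "totally_unimodular_on R C M \<longleftrightarrow>
     (\<forall>k rs cs. length rs = k \<and> length cs = k \<and> distinct rs \<and> distinct cs \<and>
        set rs \<subseteq> R \<and> set cs \<subseteq> C \<longrightarrow>
        det (mat k k (\<lambda>(a, b). M (rs ! a) (cs ! b))) \<in> {-1, 0, 1})"

text \<open>Throughout: I column index set, J row index set of B; Ib = N - I, Jb = M2 - J.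
  Binv = B_{JI}^{-1}, indexed I \<times> J.\<close>

definition red_s :: "'r2 set \<Rightarrow> 'c set \<Rightarrow> ('r2 \<Rightarrow> 'c \<Rightarrow> real) \<Rightarrow> ('r2 \<Rightarrow> real) \<Rightarrow> 'c \<Rightarrow> real" where
  "red_s J I B d = (\<lambda>i. \<Sum>j\<in>J. inverse_on J I B i j * d j)"

definition red_S :: "'r2 set \<Rightarrow> 'c set \<Rightarrow> ('r2 \<Rightarrow> 'c \<Rightarrow> real) \<Rightarrow> 'c \<Rightarrow> 'c \<Rightarrow> real" where
  "red_S J I B = (\<lambda>i k. - (\<Sum>j\<in>J. inverse_on J I B i j * B j k))"

definition red_Q :: "'c set \<Rightarrow> ('c \<Rightarrow> 'c \<Rightarrow> real) \<Rightarrow> ('c \<Rightarrow> 'c \<Rightarrow> real) \<Rightarrow> 'c \<Rightarrow> 'c \<Rightarrow> real" where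
  "red_Q I S Q = (\<lambda>k l. (\<Sum>i\<in>I. \<Sum>i'\<in>I. S i k * Q i i' * S i' l)
                      + (\<Sum>i\<in>I. S i k * Q i l) + (\<Sum>i\<in>I. Q i k * S i l) + Q k l)"

definition red_A :: "'c set \<Rightarrow> ('c \<Rightarrow> 'c \<Rightarrow> real) \<Rightarrow> ('r \<Rightarrow> 'c \<Rightarrow> real) \<Rightarrow> 'r \<Rightarrow> 'c \<Rightarrow> real" where
  "red_A I S A = (\<lambda>r k. (\<Sum>i\<in>I. A r i * S i k) + A r k)"

definition red_b :: "'c set \<Rightarrow> ('c \<Rightarrow> real) \<Rightarrow> ('r \<Rightarrow> 'c \<Rightarrow> real) \<Rightarrow> ('r \<Rightarrow> real) \<Rightarrow> 'r \<Rightarrow> real" where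
  "red_b I s A b = (\<lambda>r. b r - (\<Sum>i\<in>I. A r i * s i))"

definition red_c :: "'c set \<Rightarrow> ('c \<Rightarrow> real) \<Rightarrow> ('c \<Rightarrow> 'c \<Rightarrow> real) \<Rightarrow> ('c \<Rightarrow> 'c \<Rightarrow> real) \<Rightarrow> ('c \<Rightarrow> real) \<Rightarrow> 'c \<Rightarrow> real" where
  "red_c I s S Q c = (\<lambda>k. 2 * (\<Sum>i\<in>I. \<Sum>i'\<in>I. S i k * Q i i' * s i')
                   + 2 * (\<Sum>i\<in>I. Q i k * s i) + (\<Sum>i\<in>I. S i k * c i) + c k)"

definition red_c0 :: "'c set \<Rightarrow> ('c \<Rightarrow> real) \<Rightarrow> ('c \<Rightarrow> 'c \<Rightarrow> real) \<Rightarrow> ('c \<Rightarrow> real) \<Rightarrow> real" where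
  "red_c0 I s Q c = (\<Sum>i\<in>I. \<Sum>i'\<in>I. s i * Q i i' * s i') + (\<Sum>i\<in>I. c i * s i)"

text \<open>Vectors x \<in> {0,1}^N are functions 'c \<Rightarrow> real that are 0/1 on N and 0 outside N.\<close>

definition objP :: "'c set \<Rightarrow> ('c \<Rightarrow> 'c \<Rightarrow> real) \<Rightarrow> ('c \<Rightarrow> real) \<Rightarrow> ('c \<Rightarrow> real) \<Rightarrow> real" where
  "objP N Q c x = (\<Sum>i\<in>N. \<Sum>j\<in>N. x i * Q i j * x j) + (\<Sum>i\<in>N. c i * x i)"

definition feasP :: "'c set \<Rightarrow> 'r1 set \<Rightarrow> 'r2 set \<Rightarrow> ('r1 \<Rightarrow> 'c \<Rightarrow> real) \<Rightarrow> ('r1 \<Rightarrow> real)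
     \<Rightarrow> ('r2 \<Rightarrow> 'c \<Rightarrow> real) \<Rightarrow> ('r2 \<Rightarrow> real) \<Rightarrow> ('c \<Rightarrow> real) set" where
  "feasP N M1 M2 A b B d = {x. (\<forall>i\<in>N. x i \<in> {0, 1}) \<and> (\<forall>i. i \<notin> N \<longrightarrow> x i = 0)
               \<and> (\<forall>r\<in>M1. (\<Sum>i\<in>N. A r i * x i) \<ge> b r)
               \<and> (\<forall>r\<in>M2. (\<Sum>i\<in>N. B r i * x i) = d r)}"

definition objP' :: "'c set \<Rightarrow> ('c \<Rightarrow> 'c \<Rightarrow> real) \<Rightarrow> ('c \<Rightarrow> real) \<Rightarrow> real \<Rightarrow> ('c \<Rightarrow> real) \<Rightarrow> real" where
  "objP' Ib Q' c' c0 y = (\<Sum>k\<in>Ib. \<Sum>l\<in>Ib. y k * Q' k l * y l) + (\<Sum>k\<in>Ib. c' k * y k) + c0"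

definition feasP' :: "'c set \<Rightarrow> 'c set \<Rightarrow> 'r1 set \<Rightarrow> 'r2 set \<Rightarrow> ('r1 \<Rightarrow> 'c \<Rightarrow> real) \<Rightarrow> ('r1 \<Rightarrow> real)
     \<Rightarrow> ('r2 \<Rightarrow> 'c \<Rightarrow> real) \<Rightarrow> ('r2 \<Rightarrow> real) \<Rightarrow> ('c \<Rightarrow> 'c \<Rightarrow> real) \<Rightarrow> ('c \<Rightarrow> real) \<Rightarrow> ('c \<Rightarrow> real) set" where
  "feasP' Ib I M1 Jb A' b' B' d' S s = {y. (\<forall>k\<in>Ib. y k \<in> {0, 1}) \<and> (\<forall>k. k \<notin> Ib \<longrightarrow> y k = 0)
               \<and> (\<forall>r\<in>M1. (\<Sum>k\<in>Ib. A' r k * y k) \<ge> b' r)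
               \<and> (\<forall>r\<in>Jb. (\<Sum>k\<in>Ib. B' r k * y k) = d' r)
               \<and> (\<forall>i\<in>I. (\<Sum>k\<in>Ib. S i k * y k) \<ge> - s i)
               \<and> (\<forall>i\<in>I. (\<Sum>k\<in>Ib. S i k * y k) \<le> 1 - s i)}"

definition lift :: "'c set \<Rightarrow> 'c set \<Rightarrow> ('c \<Rightarrow> real) \<Rightarrow> ('c \<Rightarrow> 'c \<Rightarrow> real) \<Rightarrow> ('c \<Rightarrow> real) \<Rightarrow> 'c \<Rightarrow> real" where
  "lift I Ib s S y = (\<lambda>i. if i \<in> I then s i + (\<Sum>k\<in>Ib. S i k * y k) else y i)"

end

theory Submission
  imports Defs
begin

lemma det_Ints:
  fixes A :: "real mat"
  assumes "\<And>i j. i < dim_row A \<Longrightarrow> j < dim_col A \<Longrightarrow> A $$ (i,j) \<in> \<int>"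
  shows "det A \<in> \<int>"
proof (cases "dim_row A = dim_col A")
  case True
  show ?thesis using True unfolding det_def
    apply (simp del: of_int_minus)
    apply (intro Ints_sum Ints_mult Ints_prod)
     apply simp
    apply (rule assms)
     apply simp
    by (metis atLeastLessThan_iff True mem_Collect_eq permutes_in_image)
qed (simp add: det_def)

lemma adj_Ints:
  fixes A :: "real mat"
  assumes "\<And>i j. i < dim_row A \<Longrightarrow> j < dim_col A \<Longrightarrow> A $$ (i,j) \<in> \<int>"
    and "i < dim_row A" "j < dim_col A"
  shows "adj_mat A $$ (i,j) \<in> \<int>"
  unfolding adj_mat_def cofactor_def using assms(2,3)
  apply simp
  apply (intro Ints_mult Ints_power det_Ints)
   apply simp
  apply (simp add: mat_delete_def)
  by (auto intro!: assms(1))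

lemma sum_nth_distinct:
  assumes "distinct xs"
  shows "(\<Sum>k<length xs. f (xs ! k)) = sum f (set xs)"
  using sum.reindex_bij_betw[OF bij_betw_nth[OF assms refl refl], of f] by simp

lemma card_eq_inv:
  assumes "finite R" "finite C" "is_inverse_on R C M Minv"
  shows "card R = card C"
proof -
  have "(\<Sum>r\<in>R. \<Sum>k\<in>C. M r k * Minv k r) = (\<Sum>r\<in>R. 1::real)"
    using assms(3) unfolding is_inverse_on_def by (intro sum.cong) auto
  moreover have "(\<Sum>k\<in>C. \<Sum>r\<in>R. Minv k r * M r k) = (\<Sum>k\<in>C. 1::real)"
    using assms(3) unfolding is_inverse_on_def by (intro sum.cong) auto
  moreover have "(\<Sum>r\<in>R. \<Sum>k\<in>C. M r k * Minv k r) = (\<Sum>k\<in>C. \<Sum>r\<in>R. Minv k r * M r k)"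
    by (subst sum.swap) (simp add: mult.commute)
  ultimately show ?thesis by simp
qed

lemma inv_Ints:
  assumes finJ: "finite J" and finI: "finite I" and IN: "I \<subseteq> N"
    and hinv: "is_inverse_on J I B Minv"
    and TU: "totally_unimodular_on J N B"
    and Bint: "\<forall>j\<in>J. \<forall>i\<in>N. B j i \<in> \<int>"
    and i: "i \<in> I" and j: "j \<in> J"
  shows "Minv i j \<in> \<int>"
proof -
  obtain rs where rs: "set rs = J" "distinct rs" using finite_distinct_list[OF finJ] by blast
  obtain cs where cs: "set cs = I" "distinct cs" using finite_distinct_list[OF finI] by blast
  define n where "n = length rs"
  have lcs: "length cs = n" using card_eq_inv[OF finJ finI hinv] rs cs
    by (metis distinct_card n_def)
  define Mb where "Mb = mat n n (\<lambda>(a,b). B (rs!a) (cs!b))"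
  define Mi where "Mi = mat n n (\<lambda>(a,b). Minv (cs!a) (rs!b))"
  have Mb: "Mb \<in> carrier_mat n n" and Mi: "Mi \<in> carrier_mat n n" unfolding Mb_def Mi_def by auto
  have prod: "Mb * Mi = 1\<^sub>m n"
  proof (rule eq_matI)
    fix a b assume ab: "a < dim_row (1\<^sub>m n :: real mat)" "b < dim_col (1\<^sub>m n :: real mat)"
    hence ab': "a < n" "b < n" by auto
    have "(Mb * Mi) $$ (a,b) = (\<Sum>k<n. B (rs!a) (cs!k) * Minv (cs!k) (rs!b))"
      using ab' unfolding Mb_def Mi_def by (simp add: scalar_prod_def lessThan_atLeast0)
    also have "\<dots> = (\<Sum>k\<in>I. B (rs!a) k * Minv k (rs!b))"
      using sum_nth_distinct[OF cs(2), of "\<lambda>k. B (rs!a) k * Minv k (rs!b)"] cs lcs by simp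
    also have "\<dots> = (if rs!a = rs!b then 1 else 0)"
      using hinv ab' rs unfolding is_inverse_on_def n_def by auto
    also have "\<dots> = 1\<^sub>m n $$ (a,b)" using ab' rs(2) n_def nth_eq_iff_index_eq by auto
    finally show "(Mb * Mi) $$ (a,b) = 1\<^sub>m n $$ (a,b)" .
  qed (use Mb Mi in auto)
  have "det Mb * det Mi = 1" using det_mult[OF Mb Mi] prod by simp
  moreover have "det Mb \<in> {-1,0,1}" using TU rs cs lcs IN unfolding totally_unimodular_on_def Mb_def n_def by auto
  ultimately have dpm: "det Mb = 1 \<or> det Mb = -1" by auto
  have "adj_mat Mb = adj_mat Mb * (Mb * Mi)" using adj_mat[OF Mb] prod by simp
  also have "\<dots> = (adj_mat Mb * Mb) * Mi" by (rule assoc_mult_mat[symmetric]) (use adj_mat[OF Mb] Mb Mi in auto)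
  also have "\<dots> = det Mb \<cdot>\<^sub>m Mi" using adj_mat(3)[OF Mb] mult_smult_assoc_mat[OF one_carrier_mat Mi, of "det Mb"] Mi by simp
  finally have eq: "adj_mat Mb = det Mb \<cdot>\<^sub>m Mi" .
  obtain a where a: "a < n" "cs!a = i" using i cs lcs by (metis in_set_conv_nth)
  obtain b where b: "b < n" "rs!b = j" using j rs n_def by (metis in_set_conv_nth)
  have rsJ: "\<And>k. k < n \<Longrightarrow> rs!k \<in> J" using rs n_def nth_mem by blast
  have csN: "\<And>k. k < n \<Longrightarrow> cs!k \<in> N" using cs lcs nth_mem IN by blast
  have "adj_mat Mb $$ (a,b) \<in> \<int>"
    using a b Mb by (intro adj_Ints) (auto simp: Mb_def intro!: Bint[rule_format] rsJ csN)
  hence "det Mb * Mi $$ (a,b) \<in> \<int>" using eq a b Mi by simp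
  hence "Mi $$ (a,b) \<in> \<int>" using dpm by (metis Ints_minus minus_minus mult_1 mult_minus_left)
  thus ?thesis using a b unfolding Mi_def by simp
qed


lemma lin_lift:
  assumes "finite I" "finite Ib" "I \<inter> Ib = {}"
  shows "(\<Sum>i\<in>I\<union>Ib. a i * lift I Ib s S y i)
     = (\<Sum>i\<in>I. a i * s i) + (\<Sum>k\<in>Ib. ((\<Sum>i\<in>I. a i * S i k) + a k) * y k)"
proof -
  have "(\<Sum>i\<in>I\<union>Ib. a i * lift I Ib s S y i) = (\<Sum>i\<in>I. a i * (s i + (\<Sum>k\<in>Ib. S i k * y k))) + (\<Sum>k\<in>Ib. a k * y k)"
    using assms by (simp add: sum.union_disjoint lift_def) (intro sum.cong, auto)
  also have "(\<Sum>i\<in>I. a i * (s i + (\<Sum>k\<in>Ib. S i k * y k))) = (\<Sum>i\<in>I. a i * s i) + (\<Sum>i\<in>I. \<Sum>k\<in>Ib. a i * S i k * y k)"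
    by (simp add: algebra_simps sum.distrib sum_distrib_left)
  also have "(\<Sum>i\<in>I. \<Sum>k\<in>Ib. a i * S i k * y k) = (\<Sum>k\<in>Ib. (\<Sum>i\<in>I. a i * S i k) * y k)"
    by (subst sum.swap) (simp add: sum_distrib_right)
  finally show ?thesis by (simp add: algebra_simps sum.distrib)
qed

lemma H1:
  fixes S Q :: "'c \<Rightarrow> 'c \<Rightarrow> real"
  shows "(\<Sum>i\<in>I. \<Sum>i'\<in>I. (\<Sum>k\<in>K. S i k * y k) * Q i i' * (\<Sum>l\<in>K. S i' l * y l))
       = (\<Sum>k\<in>K. \<Sum>l\<in>K. y k * (\<Sum>i\<in>I. \<Sum>i'\<in>I. S i k * Q i i' * S i' l) * y l)"
proof -
  have "(\<Sum>i\<in>I. \<Sum>i'\<in>I. (\<Sum>k\<in>K. S i k * y k) * Q i i' * (\<Sum>l\<in>K. S i' l * y l))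
    = (\<Sum>i\<in>I. \<Sum>i'\<in>I. \<Sum>k\<in>K. \<Sum>l\<in>K. y k * (S i k * Q i i' * S i' l) * y l)"
    by (simp add: sum_distrib_left sum_distrib_right mult_ac)
  also have "\<dots> = (\<Sum>i\<in>I. \<Sum>k\<in>K. \<Sum>i'\<in>I. \<Sum>l\<in>K. y k * (S i k * Q i i' * S i' l) * y l)"
    by (rule sum.cong[OF refl], rule sum.swap)
  also have "\<dots> = (\<Sum>k\<in>K. \<Sum>i\<in>I. \<Sum>i'\<in>I. \<Sum>l\<in>K. y k * (S i k * Q i i' * S i' l) * y l)"
    by (rule sum.swap)
  also have "\<dots> = (\<Sum>k\<in>K. \<Sum>i\<in>I. \<Sum>l\<in>K. \<Sum>i'\<in>I. y k * (S i k * Q i i' * S i' l) * y l)"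
    by (intro sum.cong refl sum.swap)
  also have "\<dots> = (\<Sum>k\<in>K. \<Sum>l\<in>K. \<Sum>i\<in>I. \<Sum>i'\<in>I. y k * (S i k * Q i i' * S i' l) * y l)"
    by (intro sum.cong refl sum.swap)
  also have "\<dots> = (\<Sum>k\<in>K. \<Sum>l\<in>K. y k * (\<Sum>i\<in>I. \<Sum>i'\<in>I. S i k * Q i i' * S i' l) * y l)"
    by (simp add: sum_distrib_left sum_distrib_right)
  finally show ?thesis .
qed

lemma H2a:
  fixes S Q :: "'c \<Rightarrow> 'c \<Rightarrow> real"
  shows "(\<Sum>i\<in>I. \<Sum>i'\<in>I. (\<Sum>k\<in>K. S i k * y k) * Q i i' * s i')
       = (\<Sum>k\<in>K. (\<Sum>i\<in>I. \<Sum>i'\<in>I. S i k * Q i i' * s i') * y k)"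
proof -
  have "(\<Sum>i\<in>I. \<Sum>i'\<in>I. (\<Sum>k\<in>K. S i k * y k) * Q i i' * s i')
     = (\<Sum>i\<in>I. \<Sum>i'\<in>I. \<Sum>k\<in>K. S i k * Q i i' * s i' * y k)"
    by (simp add: sum_distrib_left sum_distrib_right mult_ac)
  also have "\<dots> = (\<Sum>i\<in>I. \<Sum>k\<in>K. \<Sum>i'\<in>I. S i k * Q i i' * s i' * y k)"
    by (intro sum.cong refl sum.swap)
  also have "\<dots> = (\<Sum>k\<in>K. \<Sum>i\<in>I. \<Sum>i'\<in>I. S i k * Q i i' * s i' * y k)"
    by (rule sum.swap)
  also have "\<dots> = (\<Sum>k\<in>K. (\<Sum>i\<in>I. \<Sum>i'\<in>I. S i k * Q i i' * s i') * y k)"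
    by (simp add: sum_distrib_right)
  finally show ?thesis .
qed

lemma H2b:
  fixes S Q :: "'c \<Rightarrow> 'c \<Rightarrow> real"
  assumes "\<forall>i\<in>I. \<forall>j\<in>I. Q i j = Q j i"
  shows "(\<Sum>i\<in>I. \<Sum>i'\<in>I. s i * Q i i' * (\<Sum>k\<in>K. S i' k * y k))
       = (\<Sum>i\<in>I. \<Sum>i'\<in>I. (\<Sum>k\<in>K. S i k * y k) * Q i i' * s i')"
proof -
  have "(\<Sum>i\<in>I. \<Sum>i'\<in>I. s i * Q i i' * (\<Sum>k\<in>K. S i' k * y k))
     = (\<Sum>i'\<in>I. \<Sum>i\<in>I. s i * Q i i' * (\<Sum>k\<in>K. S i' k * y k))" by (rule sum.swap)
  also have "\<dots> = (\<Sum>i'\<in>I. \<Sum>i\<in>I. (\<Sum>k\<in>K. S i' k * y k) * Q i' i * s i)"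
    using assms by (intro sum.cong refl) (simp add: mult_ac)
  finally show ?thesis .
qed

lemma H3:
  fixes S Q :: "'c \<Rightarrow> 'c \<Rightarrow> real"
  shows "(\<Sum>i\<in>I. \<Sum>l\<in>K. (s i + (\<Sum>k\<in>K. S i k * y k)) * Q i l * y l)
     = (\<Sum>l\<in>K. (\<Sum>i\<in>I. Q i l * s i) * y l) + (\<Sum>k\<in>K. \<Sum>l\<in>K. y k * (\<Sum>i\<in>I. S i k * Q i l) * y l)"
proof -
  have "(\<Sum>i\<in>I. \<Sum>l\<in>K. (s i + (\<Sum>k\<in>K. S i k * y k)) * Q i l * y l)
     = (\<Sum>i\<in>I. \<Sum>l\<in>K. Q i l * s i * y l) + (\<Sum>i\<in>I. \<Sum>l\<in>K. \<Sum>k\<in>K. y k * (S i k * Q i l) * y l)"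
    by (simp add: algebra_simps sum.distrib sum_distrib_left sum_distrib_right)
  also have "(\<Sum>i\<in>I. \<Sum>l\<in>K. Q i l * s i * y l) = (\<Sum>l\<in>K. (\<Sum>i\<in>I. Q i l * s i) * y l)"
    by (subst sum.swap) (simp add: sum_distrib_right)
  also have "(\<Sum>i\<in>I. \<Sum>l\<in>K. \<Sum>k\<in>K. y k * (S i k * Q i l) * y l)
     = (\<Sum>i\<in>I. \<Sum>k\<in>K. \<Sum>l\<in>K. y k * (S i k * Q i l) * y l)"
    by (intro sum.cong refl sum.swap)
  also have "\<dots> = (\<Sum>k\<in>K. \<Sum>i\<in>I. \<Sum>l\<in>K. y k * (S i k * Q i l) * y l)"
    by (rule sum.swap)
  also have "\<dots> = (\<Sum>k\<in>K. \<Sum>l\<in>K. \<Sum>i\<in>I. y k * (S i k * Q i l) * y l)"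
    by (intro sum.cong refl sum.swap)
  also have "\<dots> = (\<Sum>k\<in>K. \<Sum>l\<in>K. y k * (\<Sum>i\<in>I. S i k * Q i l) * y l)"
    by (simp add: sum_distrib_left sum_distrib_right)
  finally show ?thesis .
qed

lemma H4:
  fixes S Q :: "'c \<Rightarrow> 'c \<Rightarrow> real"
  assumes "\<forall>i\<in>I. \<forall>k\<in>K. Q k i = Q i k"
  shows "(\<Sum>k\<in>K. \<Sum>i\<in>I. y k * Q k i * (s i + (\<Sum>l\<in>K. S i l * y l)))
     = (\<Sum>k\<in>K. (\<Sum>i\<in>I. Q i k * s i) * y k) + (\<Sum>k\<in>K. \<Sum>l\<in>K. y k * (\<Sum>i\<in>I. Q i k * S i l) * y l)"
proof -
  have "(\<Sum>k\<in>K. \<Sum>i\<in>I. y k * Q k i * (s i + (\<Sum>l\<in>K. S i l * y l)))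
     = (\<Sum>k\<in>K. \<Sum>i\<in>I. y k * Q i k * (s i + (\<Sum>l\<in>K. S i l * y l)))"
    using assms by (intro sum.cong refl) auto
  also have "\<dots> = (\<Sum>k\<in>K. \<Sum>i\<in>I. Q i k * s i * y k) + (\<Sum>k\<in>K. \<Sum>i\<in>I. \<Sum>l\<in>K. y k * (Q i k * S i l) * y l)"
    by (simp add: algebra_simps sum.distrib sum_distrib_left sum_distrib_right)
  also have "(\<Sum>k\<in>K. \<Sum>i\<in>I. Q i k * s i * y k) = (\<Sum>k\<in>K. (\<Sum>i\<in>I. Q i k * s i) * y k)"
    by (simp add: sum_distrib_right)
  also have "(\<Sum>k\<in>K. \<Sum>i\<in>I. \<Sum>l\<in>K. y k * (Q i k * S i l) * y l)
     = (\<Sum>k\<in>K. \<Sum>l\<in>K. \<Sum>i\<in>I. y k * (Q i k * S i l) * y l)"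
    by (intro sum.cong refl sum.swap)
  also have "\<dots> = (\<Sum>k\<in>K. \<Sum>l\<in>K. y k * (\<Sum>i\<in>I. Q i k * S i l) * y l)"
    by (simp add: sum_distrib_left sum_distrib_right)
  finally show ?thesis .
qed


lemma obj_lift:
  fixes Q :: "'c \<Rightarrow> 'c \<Rightarrow> real"
  assumes fin: "finite I" "finite Ib" and disj: "I \<inter> Ib = {}"
    and sym: "\<forall>i\<in>I\<union>Ib. \<forall>j\<in>I\<union>Ib. Q i j = Q j i"
  shows "objP (I\<union>Ib) Q c (lift I Ib s S y) = objP' Ib (red_Q I S Q) (red_c I s S Q c) (red_c0 I s Q c) y"
proof -
  define x where "x = lift I Ib s S y"
  have xI: "\<And>i. i \<in> I \<Longrightarrow> x i = s i + (\<Sum>k\<in>Ib. S i k * y k)" unfolding x_def lift_def by simp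
  have xK: "\<And>i. i \<in> Ib \<Longrightarrow> x i = y i" unfolding x_def lift_def using disj by auto
  have symI: "\<forall>i\<in>I. \<forall>j\<in>I. Q i j = Q j i" using sym by blast
  have symIK: "\<forall>i\<in>I. \<forall>k\<in>Ib. Q k i = Q i k" using sym by blast
  have split: "(\<Sum>i\<in>I\<union>Ib. \<Sum>j\<in>I\<union>Ib. x i * Q i j * x j)
     = (\<Sum>i\<in>I. \<Sum>j\<in>I. x i * Q i j * x j) + (\<Sum>i\<in>I. \<Sum>j\<in>Ib. x i * Q i j * x j)
     + (\<Sum>i\<in>Ib. \<Sum>j\<in>I. x i * Q i j * x j) + (\<Sum>i\<in>Ib. \<Sum>j\<in>Ib. x i * Q i j * x j)"
    using fin disj by (simp add: sum.union_disjoint sum.distrib)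
  have e1: "(\<Sum>i\<in>I. \<Sum>j\<in>I. x i * Q i j * x j)
     = (\<Sum>i\<in>I. \<Sum>j\<in>I. (s i + (\<Sum>k\<in>Ib. S i k * y k)) * Q i j * (s j + (\<Sum>k\<in>Ib. S j k * y k)))"
    using xI by (intro sum.cong refl) auto
  also have "\<dots> = (\<Sum>i\<in>I. \<Sum>j\<in>I. s i * Q i j * s j)
     + (\<Sum>i\<in>I. \<Sum>i'\<in>I. s i * Q i i' * (\<Sum>k\<in>Ib. S i' k * y k))
     + (\<Sum>i\<in>I. \<Sum>i'\<in>I. (\<Sum>k\<in>Ib. S i k * y k) * Q i i' * s i')
     + (\<Sum>i\<in>I. \<Sum>i'\<in>I. (\<Sum>k\<in>Ib. S i k * y k) * Q i i' * (\<Sum>l\<in>Ib. S i' l * y l))"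
    by (simp add: algebra_simps sum.distrib)
  also have "\<dots> = (\<Sum>i\<in>I. \<Sum>j\<in>I. s i * Q i j * s j)
     + (\<Sum>k\<in>Ib. 2 * (\<Sum>i\<in>I. \<Sum>i'\<in>I. S i k * Q i i' * s i') * y k)
     + (\<Sum>k\<in>Ib. \<Sum>l\<in>Ib. y k * (\<Sum>i\<in>I. \<Sum>i'\<in>I. S i k * Q i i' * S i' l) * y l)"
  proof -
    have tw: "(\<Sum>k\<in>Ib. 2 * (\<Sum>i\<in>I. \<Sum>i'\<in>I. S i k * Q i i' * s i') * y k)
      = (\<Sum>k\<in>Ib. (\<Sum>i\<in>I. \<Sum>i'\<in>I. S i k * Q i i' * s i') * y k) + (\<Sum>k\<in>Ib. (\<Sum>i\<in>I. \<Sum>i'\<in>I. S i k * Q i i' * s i') * y k)"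
      by (simp only: mult_2 distrib_right sum.distrib)
    show ?thesis unfolding H1 H2b[OF symI] H2a tw by simp
  qed
  finally have e1': "(\<Sum>i\<in>I. \<Sum>j\<in>I. x i * Q i j * x j) = \<dots>" .
  have e2: "(\<Sum>i\<in>I. \<Sum>j\<in>Ib. x i * Q i j * x j)
     = (\<Sum>i\<in>I. \<Sum>l\<in>Ib. (s i + (\<Sum>k\<in>Ib. S i k * y k)) * Q i l * y l)"
    using xI xK by (intro sum.cong refl) auto
  have e3: "(\<Sum>i\<in>Ib. \<Sum>j\<in>I. x i * Q i j * x j)
     = (\<Sum>k\<in>Ib. \<Sum>i\<in>I. y k * Q k i * (s i + (\<Sum>l\<in>Ib. S i l * y l)))"
    using xI xK by (intro sum.cong refl) auto
  have e4: "(\<Sum>i\<in>Ib. \<Sum>j\<in>Ib. x i * Q i j * x j) = (\<Sum>i\<in>Ib. \<Sum>j\<in>Ib. y i * Q i j * y j)"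
    using xK by (intro sum.cong refl) auto
  have lin: "(\<Sum>i\<in>I\<union>Ib. c i * x i) = (\<Sum>i\<in>I. c i * s i) + (\<Sum>k\<in>Ib. ((\<Sum>i\<in>I. c i * S i k) + c k) * y k)"
    unfolding x_def by (rule lin_lift[OF fin disj])
  have lin2: "(\<Sum>k\<in>Ib. ((\<Sum>i\<in>I. c i * S i k) + c k) * y k) = (\<Sum>k\<in>Ib. ((\<Sum>i\<in>I. S i k * c i) + c k) * y k)"
    by (simp add: mult.commute)
  have rhs: "objP' Ib (red_Q I S Q) (red_c I s S Q c) (red_c0 I s Q c) y
    = (\<Sum>k\<in>Ib. \<Sum>l\<in>Ib. y k * (\<Sum>i\<in>I. \<Sum>i'\<in>I. S i k * Q i i' * S i' l) * y l)
    + (\<Sum>k\<in>Ib. \<Sum>l\<in>Ib. y k * (\<Sum>i\<in>I. S i k * Q i l) * y l)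
    + (\<Sum>k\<in>Ib. \<Sum>l\<in>Ib. y k * (\<Sum>i\<in>I. Q i k * S i l) * y l)
    + (\<Sum>k\<in>Ib. \<Sum>l\<in>Ib. y k * Q k l * y l)
    + (\<Sum>k\<in>Ib. 2 * (\<Sum>i\<in>I. \<Sum>i'\<in>I. S i k * Q i i' * s i') * y k)
    + (\<Sum>k\<in>Ib. (\<Sum>i\<in>I. Q i k * s i) * y k) + (\<Sum>k\<in>Ib. (\<Sum>i\<in>I. Q i k * s i) * y k)
    + (\<Sum>k\<in>Ib. ((\<Sum>i\<in>I. S i k * c i) + c k) * y k)
    + ((\<Sum>i\<in>I. \<Sum>i'\<in>I. s i * Q i i' * s i') + (\<Sum>i\<in>I. c i * s i))"
    unfolding objP'_def red_Q_def red_c_def red_c0_def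
    by (simp add: distrib_left distrib_right sum.distrib algebra_simps sum_distrib_left)
  show ?thesis
    unfolding x_def[symmetric] objP_def split e1' e2 e3 e4 lin lin2 rhs H3 H4[OF symIK]
    by simp
qed


lemma inv_apply_r:
  assumes "finite J" "finite I" "is_inverse_on J I B Minv" "j \<in> J"
  shows "(\<Sum>i\<in>I. B j i * (\<Sum>j'\<in>J. Minv i j' * f j')) = f j"
proof -
  have "(\<Sum>i\<in>I. B j i * (\<Sum>j'\<in>J. Minv i j' * f j')) = (\<Sum>i\<in>I. \<Sum>j'\<in>J. B j i * Minv i j' * f j')"
    by (simp add: sum_distrib_left mult.assoc)
  also have "\<dots> = (\<Sum>j'\<in>J. (\<Sum>i\<in>I. B j i * Minv i j') * f j')"
    by (subst sum.swap) (simp add: sum_distrib_right)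
  also have "\<dots> = (\<Sum>j'\<in>J. if j = j' then f j' else 0)"
    using assms(3,4) unfolding is_inverse_on_def by (intro sum.cong refl) auto
  also have "\<dots> = f j" using assms(1,4) by (simp add: sum.delta)
  finally show ?thesis .
qed

lemma inv_apply_l:
  assumes "finite J" "finite I" "is_inverse_on J I B Minv" "i \<in> I"
  shows "(\<Sum>j\<in>J. Minv i j * (\<Sum>i'\<in>I. B j i' * g i')) = g i"
proof -
  have "(\<Sum>j\<in>J. Minv i j * (\<Sum>i'\<in>I. B j i' * g i')) = (\<Sum>j\<in>J. \<Sum>i'\<in>I. Minv i j * B j i' * g i')"
    by (simp add: sum_distrib_left mult.assoc)
  also have "\<dots> = (\<Sum>i'\<in>I. (\<Sum>j\<in>J. Minv i j * B j i') * g i')"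
    by (subst sum.swap) (simp add: sum_distrib_right)
  also have "\<dots> = (\<Sum>i'\<in>I. if i = i' then g i' else 0)"
    using assms(3,4) unfolding is_inverse_on_def by (intro sum.cong refl) auto
  also have "\<dots> = g i" using assms(2,4) by (simp add: sum.delta)
  finally show ?thesis .
qed

lemma Ints_01:
  fixes v :: real
  assumes "v \<in> \<int>" "0 \<le> v" "v \<le> 1"
  shows "v \<in> {0,1}"
  using assms by (auto elim!: Ints_cases)


lemma main_lemma:
  fixes N :: "'c set" and M1 :: "'r1 set" and M2 :: "'r2 set"
    and Q :: "'c \<Rightarrow> 'c \<Rightarrow> real" and c :: "'c \<Rightarrow> real"
    and A :: "'r1 \<Rightarrow> 'c \<Rightarrow> real" and b :: "'r1 \<Rightarrow> real"
    and B :: "'r2 \<Rightarrow> 'c \<Rightarrow> real" and d :: "'r2 \<Rightarrow> real"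
    and J :: "'r2 set" and I :: "'c set"
  assumes finN: "finite N" and finM1: "finite M1" and finM2: "finite M2"
    and Qsym: "\<forall>i\<in>N. \<forall>j\<in>N. Q i j = Q j i"
    and JM2: "J \<subseteq> M2" and IN: "I \<subseteq> N"
    and Bint: "\<forall>j\<in>J. \<forall>i\<in>N. B j i \<in> \<int>"
    and dint: "\<forall>j\<in>J. d j \<in> \<int>"
    and TU: "totally_unimodular_on J N B"
    and inv: "invertible_on J I B"
    and Ib_def: "Ib = N - I" and Jb_def: "Jb = M2 - J"
    and s_def: "s = red_s J I B d" and S_def: "S = red_S J I B"
    and Q'_def: "Q' = red_Q I S Q" and A'_def: "A' = red_A I S A" and B'_def: "B' = red_A I S B"
    and b'_def: "b' = red_b I s A b" and c'_def: "c' = red_c I s S Q c" and d'_def: "d' = red_b I s B d"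
    and c0'_def: "c0' = red_c0 I s Q c"
    and FP_def: "FP = feasP N M1 M2 A b B d" and FP'_def: "FP' = feasP' Ib I M1 Jb A' b' B' d' S s"
    and L_def: "L = lift I Ib s S"
  shows "bij_betw L FP' FP
            \<and> (\<forall>y\<in>FP'. objP N Q c (L y) = objP' Ib Q' c' c0' y)
            \<and> (FP' \<noteq> {} \<longrightarrow> Min (objP N Q c ` FP) = Min (objP' Ib Q' c' c0' ` FP'))
            \<and> (\<forall>y\<in>FP'. (\<forall>y'\<in>FP'. objP' Ib Q' c' c0' y \<le> objP' Ib Q' c' c0' y')
                        \<longleftrightarrow> (\<forall>x\<in>FP. objP N Q c (L y) \<le> objP N Q c x))"
proof -
  define Minv where "Minv = inverse_on J I B"
  have hinv: "is_inverse_on J I B Minv"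
    using inv unfolding invertible_on_def Minv_def inverse_on_def by (rule someI_ex)
  have finJ: "finite J" using finM2 JM2 finite_subset by blast
  have finI: "finite I" using finN IN finite_subset by blast
  have finIb: "finite Ib" using finN Ib_def by simp
  have NU: "N = I \<union> Ib" and disj: "I \<inter> Ib = {}" using IN Ib_def by auto
  have hs: "\<And>i. s i = (\<Sum>j\<in>J. Minv i j * d j)" unfolding s_def red_s_def Minv_def by simp
  have hS: "\<And>i k. S i k = - (\<Sum>j\<in>J. Minv i j * B j k)" unfolding S_def red_S_def Minv_def by simp
  have Lin: "\<And>i y. i \<in> I \<Longrightarrow> L y i = s i + (\<Sum>k\<in>Ib. S i k * y k)" unfolding L_def lift_def by simp
  have LK: "\<And>i y. i \<notin> I \<Longrightarrow> L y i = y i" unfolding L_def lift_def by simp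
  have lin: "\<And>a y. (\<Sum>i\<in>N. a i * L y i) = (\<Sum>i\<in>I. a i * s i) + (\<Sum>k\<in>Ib. ((\<Sum>i\<in>I. a i * S i k) + a k) * y k)"
    unfolding NU L_def by (rule lin_lift[OF finI finIb disj])
  have F2: "(\<Sum>i\<in>N. B j i * L y i) = d j" if j: "j \<in> J" for j y
  proof -
    have a: "(\<Sum>i\<in>I. B j i * s i) = d j"
      unfolding hs by (rule inv_apply_r[OF finJ finI hinv j])
    have b: "(\<Sum>i\<in>I. B j i * S i k) + B j k = 0" for k
    proof -
      have "(\<Sum>i\<in>I. B j i * S i k) = - (\<Sum>i\<in>I. B j i * (\<Sum>j'\<in>J. Minv i j' * B j' k))"
        unfolding hS by (simp add: sum_negf)
      also have "\<dots> = - B j k" using inv_apply_r[OF finJ finI hinv j, of "\<lambda>j'. B j' k"] by simp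
      finally show ?thesis by simp
    qed
    show ?thesis unfolding lin a b by simp
  qed
  have F1: "x i = s i + (\<Sum>k\<in>Ib. S i k * x k)"
    if hx: "\<forall>j\<in>J. (\<Sum>i\<in>N. B j i * x i) = d j" and i: "i \<in> I" for x i
  proof -
    have "s i = (\<Sum>j\<in>J. Minv i j * ((\<Sum>i'\<in>I. B j i' * x i') + (\<Sum>k\<in>Ib. B j k * x k)))"
      unfolding hs using hx by (intro sum.cong refl) (simp add: NU sum.union_disjoint[OF finI finIb disj])
    also have "\<dots> = (\<Sum>j\<in>J. Minv i j * (\<Sum>i'\<in>I. B j i' * x i')) + (\<Sum>j\<in>J. Minv i j * (\<Sum>k\<in>Ib. B j k * x k))"
      by (simp add: distrib_left sum.distrib)
    also have "(\<Sum>j\<in>J. Minv i j * (\<Sum>i'\<in>I. B j i' * x i')) = x i"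
      by (rule inv_apply_l[OF finJ finI hinv i])
    also have "(\<Sum>j\<in>J. Minv i j * (\<Sum>k\<in>Ib. B j k * x k)) = - (\<Sum>k\<in>Ib. S i k * x k)"
      unfolding hS by (simp add: sum_distrib_left sum_distrib_right sum_negf mult.assoc) (rule sum.swap)
    finally show ?thesis by simp
  qed
  have MinvZ: "\<And>i j. i \<in> I \<Longrightarrow> j \<in> J \<Longrightarrow> Minv i j \<in> \<int>"
    by (rule inv_Ints[OF finJ finI IN hinv TU Bint])
  have sZ: "s i \<in> \<int>" if "i \<in> I" for i
    unfolding hs using MinvZ that dint by (intro Ints_sum Ints_mult) auto
  have SZ: "S i k \<in> \<int>" if "i \<in> I" "k \<in> Ib" for i k
    unfolding hS using MinvZ that Bint Ib_def by (intro Ints_minus Ints_sum Ints_mult) auto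
  have into: "L y \<in> FP" if y: "y \<in> FP'" for y
  proof -
    from y have y01: "\<forall>k\<in>Ib. y k \<in> {0,1}" and y0: "\<forall>k. k \<notin> Ib \<longrightarrow> y k = 0"
      and yA: "\<forall>r\<in>M1. (\<Sum>k\<in>Ib. A' r k * y k) \<ge> b' r"
      and yB: "\<forall>r\<in>Jb. (\<Sum>k\<in>Ib. B' r k * y k) = d' r"
      and ylo: "\<forall>i\<in>I. (\<Sum>k\<in>Ib. S i k * y k) \<ge> - s i"
      and yhi: "\<forall>i\<in>I. (\<Sum>k\<in>Ib. S i k * y k) \<le> 1 - s i"
      unfolding FP'_def feasP'_def by auto
    have "L y i \<in> {0,1}" if i: "i \<in> N" for i
    proof (cases "i \<in> I")
      case True
      have "L y i \<in> \<int>" unfolding Lin[OF True] using y01 sZ[OF True] SZ[OF True]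
        by (intro Ints_add Ints_sum Ints_mult) auto
      moreover have "0 \<le> L y i" "L y i \<le> 1" unfolding Lin[OF True] using ylo yhi True by auto
      ultimately show ?thesis by (rule Ints_01)
    next
      case False
      then show ?thesis using LK[OF False] y01 i Ib_def by auto
    qed
    moreover have "\<forall>i. i \<notin> N \<longrightarrow> L y i = 0"
    proof (intro allI impI)
      fix i assume "i \<notin> N"
      then have "i \<notin> I" "i \<notin> Ib" using IN Ib_def by auto
      then show "L y i = 0" using LK y0 by metis
    qed
    moreover have "\<forall>r\<in>M1. (\<Sum>i\<in>N. A r i * L y i) \<ge> b r"
      using yA unfolding lin A'_def b'_def red_A_def red_b_def by auto
    moreover have "\<forall>r\<in>M2. (\<Sum>i\<in>N. B r i * L y i) = d r"
    proof
      fix r assume r: "r \<in> M2"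
      show "(\<Sum>i\<in>N. B r i * L y i) = d r"
      proof (cases "r \<in> J")
        case True then show ?thesis by (rule F2)
      next
        case False
        then have "r \<in> Jb" using r Jb_def by auto
        then show ?thesis
          using yB unfolding lin B'_def d'_def red_A_def red_b_def by auto
      qed
    qed
    ultimately show ?thesis unfolding FP_def feasP_def by auto
  qed
  have onto: "\<exists>y\<in>FP'. L y = x" if x: "x \<in> FP" for x
  proof -
    from x have x01: "\<forall>i\<in>N. x i \<in> {0,1}" and x0: "\<forall>i. i \<notin> N \<longrightarrow> x i = 0"
      and xA: "\<forall>r\<in>M1. (\<Sum>i\<in>N. A r i * x i) \<ge> b r"
      and xB: "\<forall>r\<in>M2. (\<Sum>i\<in>N. B r i * x i) = d r"
      unfolding FP_def feasP_def by auto
    define y where "y = (\<lambda>k. if k \<in> Ib then x k else 0)"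
    have xJ: "\<forall>j\<in>J. (\<Sum>i\<in>N. B j i * x i) = d j" using xB JM2 by auto
    have Ly: "L y = x"
    proof
      fix i
      show "L y i = x i"
      proof (cases "i \<in> I")
        case True
        have "(\<Sum>k\<in>Ib. S i k * y k) = (\<Sum>k\<in>Ib. S i k * x k)" unfolding y_def by simp
        then show ?thesis using Lin[OF True] F1[OF xJ True] by simp
      next
        case False
        then show ?thesis using LK[OF False] x0 Ib_def unfolding y_def by auto
      qed
    qed
    have "y \<in> FP'"
    proof -
      have "\<forall>k\<in>Ib. y k \<in> {0,1}" using x01 Ib_def unfolding y_def by auto
      moreover have "\<forall>k. k \<notin> Ib \<longrightarrow> y k = 0" unfolding y_def by auto
      moreover have "\<forall>r\<in>M1. (\<Sum>k\<in>Ib. A' r k * y k) \<ge> b' r"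
        using xA unfolding Ly[symmetric] lin A'_def b'_def red_A_def red_b_def by auto
      moreover have "\<forall>r\<in>Jb. (\<Sum>k\<in>Ib. B' r k * y k) = d' r"
        using xB Jb_def unfolding Ly[symmetric] lin B'_def d'_def red_A_def red_b_def by auto
      moreover have "\<forall>i\<in>I. (\<Sum>k\<in>Ib. S i k * y k) \<ge> - s i \<and> (\<Sum>k\<in>Ib. S i k * y k) \<le> 1 - s i"
      proof
        fix i assume i: "i \<in> I"
        have "x i \<in> {0,1}" using x01 i IN by auto
        moreover have "x i = s i + (\<Sum>k\<in>Ib. S i k * y k)" using Ly Lin[OF i] by metis
        ultimately show "(\<Sum>k\<in>Ib. S i k * y k) \<ge> - s i \<and> (\<Sum>k\<in>Ib. S i k * y k) \<le> 1 - s i" by auto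
      qed
      ultimately show ?thesis unfolding FP'_def feasP'_def by auto
    qed
    with Ly show ?thesis by blast
  qed
  have injL: "inj_on L FP'"
  proof
    fix y y' assume y: "y \<in> FP'" and y': "y' \<in> FP'" and eq: "L y = L y'"
    show "y = y'"
    proof
      fix k
      show "y k = y' k"
      proof (cases "k \<in> Ib")
        case True
        then have "k \<notin> I" using Ib_def by auto
        then show ?thesis using eq LK by metis
      next
        case False
        then show ?thesis using y y' unfolding FP'_def feasP'_def by auto
      qed
    qed
  qed
  have imL: "L ` FP' = FP" using into onto by blast
  have bij: "bij_betw L FP' FP" using injL imL by (simp add: bij_betw_def)
  have obj: "\<forall>y\<in>FP'. objP N Q c (L y) = objP' Ib Q' c' c0' y"
  proof
    fix y assume "y \<in> FP'"
    have sym': "\<forall>i\<in>I\<union>Ib. \<forall>j\<in>I\<union>Ib. Q i j = Q j i" using Qsym NU by simp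
    show "objP N Q c (L y) = objP' Ib Q' c' c0' y"
      unfolding NU L_def Q'_def c'_def c0'_def by (rule obj_lift[OF finI finIb disj sym'])
  qed
  have imgs: "objP N Q c ` FP = objP' Ib Q' c' c0' ` FP'"
    unfolding imL[symmetric] image_image using obj by (intro image_cong refl) auto
  have opt: "\<forall>y\<in>FP'. (\<forall>y'\<in>FP'. objP' Ib Q' c' c0' y \<le> objP' Ib Q' c' c0' y')
                        \<longleftrightarrow> (\<forall>x\<in>FP. objP N Q c (L y) \<le> objP N Q c x)"
    unfolding imL[symmetric] using obj by auto
  show ?thesis using bij obj imgs opt by simp
qed

theorem mainTheorem8:
  fixes N :: "'c set" and M1 :: "'r1 set" and M2 :: "'r2 set"
    and Q :: "'c \<Rightarrow> 'c \<Rightarrow> real" and c :: "'c \<Rightarrow> real"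
    and A :: "'r1 \<Rightarrow> 'c \<Rightarrow> real" and b :: "'r1 \<Rightarrow> real"
    and B :: "'r2 \<Rightarrow> 'c \<Rightarrow> real" and d :: "'r2 \<Rightarrow> real"
    and J :: "'r2 set" and I :: "'c set"
  assumes finN: "finite N" and finM1: "finite M1" and finM2: "finite M2"
    and Qsym: "\<forall>i\<in>N. \<forall>j\<in>N. Q i j = Q j i"
    and JM2: "J \<subseteq> M2" and IN: "I \<subseteq> N"
    and Bint: "\<forall>j\<in>J. \<forall>i\<in>N. B j i \<in> \<int>"
    and dint: "\<forall>j\<in>J. d j \<in> \<int>"
    and TU: "totally_unimodular_on J N B"
    and inv: "invertible_on J I B"
  shows "let Ib = N - I; Jb = M2 - J;
             s = red_s J I B d; S = red_S J I B;
             Q' = red_Q I S Q; A' = red_A I S A; B' = red_A I S B;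
             b' = red_b I s A b; c' = red_c I s S Q c; d' = red_b I s B d;
             c0' = red_c0 I s Q c;
             FP = feasP N M1 M2 A b B d; FP' = feasP' Ib I M1 Jb A' b' B' d' S s;
             L = lift I Ib s S
         in bij_betw L FP' FP
            \<and> (\<forall>y\<in>FP'. objP N Q c (L y) = objP' Ib Q' c' c0' y)
            \<and> (FP' \<noteq> {} \<longrightarrow> Min (objP N Q c ` FP) = Min (objP' Ib Q' c' c0' ` FP'))
            \<and> (\<forall>y\<in>FP'. (\<forall>y'\<in>FP'. objP' Ib Q' c' c0' y \<le> objP' Ib Q' c' c0' y')
                        \<longleftrightarrow> (\<forall>x\<in>FP. objP N Q c (L y) \<le> objP N Q c x))"
  unfolding Let_def
  by (rule main_lemma[OF assms refl refl refl refl refl refl refl refl refl refl refl refl refl refl])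

end
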